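(* Let $E\to M$ be a holomorphic Lie algebroid of rank $m$ over a complex $n$-manifold with $\operatorname{rank}\rho=m<n$, let $(T'M,L)$ be a complex Lagrange space with Chern–Lagrange nonlinear connection $N^i_k=g^{\bar j i}\frac{\partial^2L}{\partial z^k\partial\bar\eta^j}$, and let $N^\alpha_k(z,u)=\rho^\alpha_i\big(N^i_k(z,\eta)+u^\gamma\frac{\partial\rho^i_\gamma}{\partial z^k}\big)$, $\eta^i=\rho^i_\gamma u^\gamma$, be the nonlinear connection induced on $E$ by it. Let $L^*(z,u)=L(z,\rho(z)u)$ and $g_{\alpha\bar\beta}=\frac{\partial^2L^*}{\partial u^\alpha\partial\bar u^\beta}=\rho^i_\alpha\overline{\rho^j_\beta}g_{i\bar j}$, with inverse $g^{\bar\beta\alpha}$. Then \[ N^\alpha_k=g^{\bar\beta\alpha}\frac{\partial^2L^*}{\partial z^k\partial\bar u^\beta}, \] where $\partial/\partial z^k$ is taken in the coordinates $(z,u)$ of $E$.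
   Context: Coordinates $(z^k,\eta^k)$ on $T'M$ and $(z^k,u^\alpha)$ on $E$; the anchor has holomorphic coefficients $\rho^k_\alpha(z)$. $(T'M,L)$: $L$ real function on $T'M$ with nondegenerate metric tensor $g_{i\bar j}=\partial^2L/\partial\eta^i\partial\bar\eta^j$, inverse $g^{\bar j i}$ ($g^{\bar ji}g_{k\bar j}=\delta^i_k$); $g^{\bar\beta\alpha}g_{\gamma\bar\beta}=\delta^\alpha_\gamma$. At each point (with $\eta=\rho u$) the vectors $\rho^k_\alpha\partial/\partial\eta^k$ are completed by vectors $Y_a=Y^k_a\partial/\partial\eta^k$, $a=1,\dots,n-m$, with $g_{i\bar j}Y^i_a\overline{\rho^j_\alpha}=0$ and $g_{i\bar j}Y^i_a\overline{Y^j_b}=\delta_{ab}$; the matrix $R=[\rho^i_\alpha;Y^i_a]$ is invertible and $\rho^\alpha_i$, $Y^a_i$ denote the rows of $R^{-1}$: $\rho^\alpha_i\rho^i_\beta=\delta^\alpha_\beta$, $\rho^\alpha_iY^i_a=0$, $Y^a_i\rho^i_\alpha=0$, $Y^a_iY^i_b=\delta^a_b$, $\rho^j_\alpha\rho^\alpha_i+Y^j_aY^a_i=\delta^j_i$. *)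

theory Defs
  imports "HOL-Analysis.Analysis"
begin

definition dRe :: "'i::finite \<Rightarrow> (complex^'i \<Rightarrow> complex) \<Rightarrow> complex^'i \<Rightarrow> complex" where
  "dRe k f p = vector_derivative (\<lambda>t::real. f (p + complex_of_real t *s axis k 1)) (at 0)"

definition dIm :: "'i::finite \<Rightarrow> (complex^'i \<Rightarrow> complex) \<Rightarrow> complex^'i \<Rightarrow> complex" where
  "dIm k f p = vector_derivative (\<lambda>t::real. f (p + (\<i> * complex_of_real t) *s axis k 1)) (at 0)"

definition dZ :: "'i::finite \<Rightarrow> (complex^'i \<Rightarrow> complex) \<Rightarrow> complex^'i \<Rightarrow> complex" where
  "dZ k f p = (dRe k f p - \<i> * dIm k f p) / 2"

definition dZbar :: "'i::finite \<Rightarrow> (complex^'i \<Rightarrow> complex) \<Rightarrow> complex^'i \<Rightarrow> complex" where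
  "dZbar k f p = (dRe k f p + \<i> * dIm k f p) / 2"

definition C2_on :: "'a::real_normed_vector set \<Rightarrow> ('a \<Rightarrow> 'b::real_normed_vector) \<Rightarrow> bool" where
  "C2_on S f \<longleftrightarrow> (\<exists>f' f''.
      (\<forall>x\<in>S. (f has_derivative blinfun_apply (f' x)) (at x)) \<and>
      (\<forall>x\<in>S. (f' has_derivative blinfun_apply (f'' x)) (at x)) \<and>
      continuous_on S f'')"

definition holo_on :: "(complex^'n) set \<Rightarrow> (complex^'n \<Rightarrow> complex) \<Rightarrow> bool" where
  "holo_on U f \<longleftrightarrow> (\<forall>z\<in>U. \<exists>D. (f has_derivative D) (at z) \<and>
                         (\<forall>c v. D (c *s v) = c * D v))"

definition metric :: "(complex^'n \<Rightarrow> complex^'n \<Rightarrow> real) \<Rightarrow> complex^'n \<Rightarrow> complex^'n \<Rightarrow> complex^'n^'n" where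
  "metric L z \<eta> = (\<chi> i j. dZ i (\<lambda>\<eta>'. dZbar j (\<lambda>\<eta>''. complex_of_real (L z \<eta>'')) \<eta>') \<eta>)"

definition chern_lagrange_N :: "(complex^'n \<Rightarrow> complex^'n \<Rightarrow> real) \<Rightarrow> complex^'n \<Rightarrow> complex^'n \<Rightarrow> 'n \<Rightarrow> 'n \<Rightarrow> complex" where
  "chern_lagrange_N L z \<eta> i k =
     (\<Sum>j\<in>UNIV. matrix_inv (metric L z \<eta>) $ j $ i *
        dZ k (\<lambda>z'. dZbar j (\<lambda>\<eta>'. complex_of_real (L z' \<eta>')) \<eta>) z)"

end

theory Submission
  imports Defs "HOL-Analysis.Analysis"
begin


definition wz :: "(complex^'n \<Rightarrow> complex) \<Rightarrow> 'n \<Rightarrow> complex" where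
  "wz D k = (D (axis k 1) - \<i> * D (axis k \<i>)) / 2"
definition wzb :: "(complex^'n \<Rightarrow> complex) \<Rightarrow> 'n \<Rightarrow> complex" where
  "wzb D k = (D (axis k 1) + \<i> * D (axis k \<i>)) / 2"

lemma dir_deriv:
  fixes f :: "complex^'n \<Rightarrow> complex"
  assumes f: "(f has_derivative D) (at p)"
  shows "vector_derivative (\<lambda>t::real. f (p + complex_of_real t *s e)) (at 0) = D e"
proof -
  have eq: "(\<lambda>t::real. p + complex_of_real t *s e) = (\<lambda>t. p + t *\<^sub>R e)"
    by (rule ext, simp add: vec_eq_iff of_real_def del: of_real_eq_iff)
  have g: "((\<lambda>t::real. p + complex_of_real t *s e) has_derivative (\<lambda>t. t *\<^sub>R e)) (at 0)"
    unfolding eq by (auto intro!: derivative_eq_intros)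
  have f0: "(f has_derivative D) (at (p + complex_of_real 0 *s e))"
    using f by (simp add: vec_eq_iff)
  have bl: "bounded_linear D" using f has_derivative_bounded_linear by blast
  have "((\<lambda>t::real. f (p + complex_of_real t *s e)) has_derivative (\<lambda>t. D (t *\<^sub>R e))) (at 0)"
    using has_derivative_compose[OF g f0] by simp
  also have "(\<lambda>t. D (t *\<^sub>R e)) = (\<lambda>t. t *\<^sub>R D e)"
    using bl by (simp add: linear_simps)
  finally show ?thesis
    by (intro vector_derivative_at) (simp add: has_vector_derivative_def)
qed

lemma axis_i: "(\<i> * complex_of_real t) *s axis k (1::complex) = complex_of_real t *s axis k \<i>"
  by (auto simp: vec_eq_iff axis_def)

lemma dZ_deriv:
  assumes f: "(f has_derivative D) (at p)"
  shows "dZ k f p = wz D k" "dZbar k f p = wzb D k"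
  using dir_deriv[OF f]
  by (simp_all add: dZ_def dZbar_def dRe_def dIm_def wz_def wzb_def axis_i)



lemma aux1: "Re z *\<^sub>R (a::complex) + Im z *\<^sub>R b = z*((a - \<i>*b)/2) + cnj z*((a + \<i>*b)/2)"
  by (simp add: complex_eq_iff field_simps)

lemma vec_decomp: "(v::complex^'n) = (\<Sum>l\<in>UNIV. Re (v$l) *\<^sub>R axis l 1 + Im (v$l) *\<^sub>R axis l \<i>)"
proof -
  have "\<And>i. (\<Sum>l\<in>UNIV. (Re (v$l) *\<^sub>R axis l 1 + Im (v$l) *\<^sub>R axis l \<i>) $ i) = v $ i"
  proof -
    fix i
    have "(\<Sum>l\<in>UNIV. (Re (v$l) *\<^sub>R axis l 1 + Im (v$l) *\<^sub>R axis l \<i>) $ i)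
        = (\<Sum>l\<in>UNIV. if l = i then v $ i else 0)"
      proof (rule sum.cong)
      fix l show "(Re (v$l) *\<^sub>R axis l 1 + Im (v$l) *\<^sub>R axis l \<i>) $ i = (if l = i then v $ i else 0)"
        apply (cases "l = i")
         apply (simp add: axis_def vector_scaleR_component del: scaleR_conv_of_real)
         apply (simp add: complex_eq_iff)
        apply (simp add: axis_def)
        done
    qed simp
    then show "?thesis i" by simp
  qed
  then show ?thesis unfolding vec_eq_iff sum_component by metis
qed

lemma wirt_decomp:
  fixes D :: "complex^'n \<Rightarrow> complex"
  assumes bl: "bounded_linear D"
  shows "D v = (\<Sum>l\<in>UNIV. v$l * wz D l + cnj (v$l) * wzb D l)"
proof -
  have "D v = D (\<Sum>l\<in>UNIV. Re (v$l) *\<^sub>R axis l 1 + Im (v$l) *\<^sub>R axis l \<i>)"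
    by (rule arg_cong[where f=D, OF vec_decomp])
  also have "\<dots> = (\<Sum>l\<in>UNIV. Re (v$l) *\<^sub>R D (axis l 1) + Im (v$l) *\<^sub>R D (axis l \<i>))"
    using bl by (simp add: linear_simps linear_sum[OF bounded_linear.linear[OF bl]])
  also have "\<dots> = (\<Sum>l\<in>UNIV. v$l * wz D l + cnj (v$l) * wzb D l)"
  proof (rule sum.cong)
    fix l
    show "Re (v$l) *\<^sub>R D (axis l 1) + Im (v$l) *\<^sub>R D (axis l \<i>) = v$l * wz D l + cnj (v$l) * wzb D l"
      unfolding wz_def wzb_def by (rule aux1)
  qed simp
  finally show ?thesis .
qed

lemma sum_comb1: "((\<Sum>l\<in>A. f l) + (\<Sum>l\<in>A. g l) - (c::complex) * ((\<Sum>l\<in>A. h l) - (\<Sum>l\<in>A. q l))) / 2 = (\<Sum>l\<in>A. (f l + g l - c*(h l - q l))/2)"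
proof -
  have "(\<Sum>l\<in>A. (f l + g l - c*(h l - q l))/2) = (\<Sum>l\<in>A. f l + g l - c*(h l - q l))/2"
    by (rule sum_divide_distrib[symmetric])
  also have "(\<Sum>l\<in>A. f l + g l - c*(h l - q l)) = sum f A + sum g A - c*(sum h A - sum q A)"
    by (simp add: sum.distrib sum_subtractf sum_distrib_left right_diff_distrib)
  finally show ?thesis by simp
qed
lemma sum_comb2: "((\<Sum>l\<in>A. f l) + (\<Sum>l\<in>A. g l) + (c::complex) * ((\<Sum>l\<in>A. h l) - (\<Sum>l\<in>A. q l))) / 2 = (\<Sum>l\<in>A. (f l + g l + c*(h l - q l))/2)"
proof -
  have "(\<Sum>l\<in>A. (f l + g l + c*(h l - q l))/2) = (\<Sum>l\<in>A. f l + g l + c*(h l - q l))/2"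
    by (rule sum_divide_distrib[symmetric])
  also have "(\<Sum>l\<in>A. f l + g l + c*(h l - q l)) = sum f A + sum g A + c*(sum h A - sum q A)"
    by (simp add: sum.distrib sum_subtractf sum_distrib_left right_diff_distrib)
  finally show ?thesis by simp
qed

lemma wirt_comp:
  fixes D :: "complex^'n \<Rightarrow> complex" and P :: "complex^'m \<Rightarrow> complex^'n"
  assumes bl: "bounded_linear D" and P: "P (axis k \<i>) = \<i> *s P (axis k 1)"
  shows "wz (\<lambda>v. D (P v)) k = (\<Sum>l\<in>UNIV. P (axis k 1) $ l * wz D l)"
    "wzb (\<lambda>v. D (P v)) k = (\<Sum>l\<in>UNIV. cnj (P (axis k 1) $ l) * wzb D l)"
proof -
  let ?p = "P (axis k 1)"
  have a: "D ?p = (\<Sum>l\<in>UNIV. ?p$l * wz D l + cnj (?p$l) * wzb D l)" by (rule wirt_decomp[OF bl])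
  have b: "D (P (axis k \<i>)) = (\<Sum>l\<in>UNIV. \<i> * ?p$l * wz D l - \<i> * cnj (?p$l) * wzb D l)"
    unfolding P by (subst wirt_decomp[OF bl]) (simp add: algebra_simps)
  have "wz (\<lambda>v. D (P v)) k = (\<Sum>l\<in>UNIV. (?p$l * wz D l + cnj (?p$l) * wzb D l - \<i> * (\<i> * ?p$l * wz D l - \<i> * cnj (?p$l) * wzb D l)) / 2)"
    by (simp only: wz_def[of "\<lambda>v. D (P v)"] a b sum_subtractf sum.distrib sum_comb1)
  also have "\<dots> = (\<Sum>l\<in>UNIV. ?p $ l * wz D l)"
    by (rule sum.cong) (auto simp: algebra_simps)
  finally show "wz (\<lambda>v. D (P v)) k = (\<Sum>l\<in>UNIV. ?p $ l * wz D l)" .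
  have "wzb (\<lambda>v. D (P v)) k = (\<Sum>l\<in>UNIV. (?p$l * wz D l + cnj (?p$l) * wzb D l + \<i> * (\<i> * ?p$l * wz D l - \<i> * cnj (?p$l) * wzb D l)) / 2)"
    by (simp only: wzb_def[of "\<lambda>v. D (P v)"] a b sum_subtractf sum.distrib sum_comb2)
  also have "\<dots> = (\<Sum>l\<in>UNIV. cnj (?p $ l) * wzb D l)"
    by (rule sum.cong) (auto simp: algebra_simps)
  finally show "wzb (\<lambda>v. D (P v)) k = (\<Sum>l\<in>UNIV. cnj (?p $ l) * wzb D l)" .
qed



lemma vm_add: "((x + y) v* (A::complex^'m^'n)) = x v* A + y v* A"
  by (simp add: vec_eq_iff vector_matrix_mult_def distrib_right sum.distrib)

lemma vm_add2: "(x v* (A + B :: complex^'m^'n)) = x v* A + x v* B"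
  by (simp add: vec_eq_iff vector_matrix_mult_def distrib_left sum.distrib)

lemma mm_add_r: "((A + B) ** (C::complex^'m^'n)) = A ** C + B ** C"
  by (simp add: vec_eq_iff matrix_matrix_mult_def distrib_right sum.distrib)

lemma transpose_add': "transpose (A + B :: complex^'m^'n) = transpose A + transpose B"
  by (simp add: vec_eq_iff transpose_def)

lemma matrix_inv_props:
  fixes G :: "complex^'n^'n"
  assumes "det G \<noteq> 0"
  shows "G ** matrix_inv G = mat 1" "matrix_inv G ** G = mat 1"
proof -
  have "invertible G" using assms invertible_det_nz by blast
  then have "\<exists>A'. G ** A' = mat 1 \<and> A' ** G = mat 1" unfolding invertible_def .
  then have "G ** matrix_inv G = mat 1 \<and> matrix_inv G ** G = mat 1"
    unfolding matrix_inv_def by (rule someI_ex)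
  then show "G ** matrix_inv G = mat 1" "matrix_inv G ** G = mat 1" by auto
qed

lemma alg:
  fixes R :: "complex^'m^'n" and Y :: "complex^'k^'n" and G :: "complex^'n^'n"
    and \<rho>inv :: "complex^'n^'m" and Yinv :: "complex^'n^'k"
    and Lk dr :: "complex^'n" and gs :: "complex^'m^'m" and A :: "complex^'m"
  assumes detG: "det G \<noteq> 0"
    and Y_orth: "\<And>a \<alpha>. (\<Sum>i\<in>UNIV. \<Sum>j\<in>UNIV. G $ i $ j * Y $ i $ a * cnj (R $ j $ \<alpha>)) = 0"
    and inv1: "\<rho>inv ** R = mat 1"
    and inv5: "R ** \<rho>inv + Y ** Yinv = mat 1"
    and gs_def: "gs = (\<chi> \<alpha> \<beta>. \<Sum>j\<in>UNIV. cnj (R$j$\<beta>) * (\<Sum>i\<in>UNIV. R$i$\<alpha> * G$i$j))"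
    and A_def: "A = (\<chi> \<beta>. \<Sum>j\<in>UNIV. cnj (R$j$\<beta>) * (Lk$j + (\<Sum>l\<in>UNIV. dr$l * G$l$j)))"
  shows "(\<Sum>i\<in>UNIV. \<rho>inv $ \<alpha> $ i * ((\<Sum>j\<in>UNIV. matrix_inv G $ j $ i * Lk $ j) + dr $ i))
       = (\<Sum>\<beta>\<in>UNIV. matrix_inv gs $ \<beta> $ \<alpha> * A $ \<beta>)"
proof -
  define Gi where "Gi = matrix_inv G"
  have GGi: "G ** Gi = mat 1" "Gi ** G = mat 1" using matrix_inv_props[OF detG] by (auto simp: Gi_def)
  define cR where "cR = (\<chi> j \<beta>. cnj (R$j$\<beta>))"
  define cinv where "cinv = (\<chi> \<alpha> j. cnj (\<rho>inv$\<alpha>$j))"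
  define V where "V = Lk v* Gi + dr"
  have gs2: "gs = transpose R ** G ** cR"
    unfolding gs_def cR_def
    by (simp add: vec_eq_iff matrix_matrix_mult_def transpose_def sum_distrib_right mult_ac)
  have Y0: "transpose Y ** G ** cR = 0"
  proof -
    have "\<And>a \<alpha>. (\<Sum>j\<in>UNIV. (\<Sum>i\<in>UNIV. Y$i$a * G$i$j) * cnj (R$j$\<alpha>))
        = (\<Sum>i\<in>UNIV. \<Sum>j\<in>UNIV. G $ i $ j * Y $ i $ a * cnj (R $ j $ \<alpha>))"
      by (subst sum.swap) (simp add: sum_distrib_left sum_distrib_right mult_ac)
    then show ?thesis using Y_orth
      by (simp add: vec_eq_iff matrix_matrix_mult_def transpose_def cR_def)
  qed
  have cinv1: "cinv ** cR = mat 1"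
  proof -
    have e: "\<And>a b. (\<Sum>k\<in>UNIV. \<rho>inv$a$k * R$k$b) = (if a = b then 1 else 0)"
      using inv1 by (simp add: vec_eq_iff matrix_matrix_mult_def mat_def)
    have "\<And>a b. (\<Sum>j\<in>UNIV. cnj (\<rho>inv$a$j) * cnj (R$j$b)) = cnj (\<Sum>k\<in>UNIV. \<rho>inv$a$k * R$k$b)"
      by simp
    then have "\<And>a b. (\<Sum>j\<in>UNIV. cnj (\<rho>inv$a$j) * cnj (R$j$b)) = (if a = b then 1 else 0)"
      by (simp only: e) simp
    then show ?thesis
      by (simp add: vec_eq_iff matrix_matrix_mult_def cinv_def cR_def mat_def)
  qed
  have tinv5: "transpose \<rho>inv ** transpose R + transpose Yinv ** transpose Y = mat 1"
    using arg_cong[where f=transpose, OF inv5]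
    by (simp add: transpose_add' matrix_transpose_mul)
  have GcR: "G ** cR = transpose \<rho>inv ** gs"
  proof -
    have "G ** cR = (transpose \<rho>inv ** transpose R + transpose Yinv ** transpose Y) ** (G ** cR)"
      by (simp add: tinv5)
    also have "\<dots> = transpose \<rho>inv ** (transpose R ** G ** cR) + transpose Yinv ** (transpose Y ** G ** cR)"
      by (simp add: mm_add_r matrix_mul_assoc)
    also have "\<dots> = transpose \<rho>inv ** gs" by (simp add: Y0 gs2)
    finally show ?thesis .
  qed
  have "(cinv ** Gi ** transpose \<rho>inv) ** gs = mat 1"
  proof -
    have "(cinv ** Gi ** transpose \<rho>inv) ** gs = cinv ** Gi ** (G ** cR)"
      by (simp add: GcR matrix_mul_assoc)
    also have "\<dots> = cinv ** (Gi ** G) ** cR" by (simp add: matrix_mul_assoc)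
    also have "\<dots> = mat 1" by (simp add: GGi cinv1)
    finally show ?thesis .
  qed
  then have "invertible gs" using invertible_left_inverse by blast
  then have gsinv: "gs ** matrix_inv gs = mat 1"
    unfolding invertible_def matrix_inv_def by (rule someI2_ex) auto
  have A2: "A = V v* (G ** cR)"
  proof -
    have "V v* G = Lk + dr v* G"
      by (simp add: V_def vm_add vector_matrix_mul_assoc GGi)
    moreover have "A = (Lk + dr v* G) v* cR"
      unfolding A_def cR_def
      by (simp add: vec_eq_iff vector_matrix_mult_def mult_ac)
    ultimately show ?thesis by (metis vector_matrix_mul_assoc)
  qed
  define w where "w = \<rho>inv *v V"
  define y where "y = Yinv *v V"
  have Vdec: "V = R *v w + Y *v y"
  proof -
    have "V = mat 1 *v V" by simp
    also have "\<dots> = (R ** \<rho>inv + Y ** Yinv) *v V" by (simp add: inv5)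
    finally show ?thesis
      by (simp add: w_def y_def matrix_vector_mult_add_rdistrib matrix_vector_mul_assoc)
  qed
  have "A = w v* gs"
  proof -
    have "A = (R *v w) v* (G ** cR) + (Y *v y) v* (G ** cR)" using A2 Vdec vm_add by metis
    also have "(R *v w) v* (G ** cR) = w v* gs"
      by (metis gs2 transpose_transpose vector_transpose_matrix vector_matrix_mul_assoc matrix_mul_assoc)
    also have "(Y *v y) v* (G ** cR) = 0"
      by (metis Y0 transpose_transpose vector_transpose_matrix vector_matrix_mul_assoc matrix_mul_assoc vector_matrix_mult_0_right)
    finally show ?thesis by simp
  qed
  then have "A v* matrix_inv gs = w"
    by (simp add: vector_matrix_mul_assoc gsinv)
  then have "(\<Sum>\<beta>\<in>UNIV. matrix_inv gs $ \<beta> $ \<alpha> * A $ \<beta>) = w $ \<alpha>"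
    by (simp add: vector_matrix_mult_def vec_eq_iff mult.commute)
  also have "w $ \<alpha> = (\<Sum>i\<in>UNIV. \<rho>inv $ \<alpha> $ i * ((\<Sum>j\<in>UNIV. matrix_inv G $ j $ i * Lk $ j) + dr $ i))"
    by (simp add: w_def V_def Gi_def matrix_vector_mult_def vector_matrix_mult_def mult_ac)
  finally show ?thesis by simp
qed



lemma wzb_deriv:
  assumes "\<And>w. ((\<lambda>x. F x w) has_derivative (\<lambda>v. F' v w)) (at x)"
  shows "((\<lambda>x. wzb (F x) j) has_derivative (\<lambda>v. wzb (\<lambda>w. F' v w) j)) (at x)"
  unfolding wzb_def by (auto intro!: derivative_eq_intros assms)

lemma bl_mv: "bounded_linear (\<lambda>x. (A::complex^'n^'m) *v x)"
proof -
  have "linear (\<lambda>x. A *v x)"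
    by (rule linearI) (simp_all add: matrix_vector_mult_def vec_eq_iff sum.distrib algebra_simps scaleR_sum_right)
  then show ?thesis using linear_conv_bounded_linear by blast
qed

lemma mv_axis: "((A::complex^'n^'m) *v axis b 1) $ l = A$l$b"
proof -
  have "(\<Sum>j\<in>UNIV. A$l$j * (axis b 1) $ j) = (\<Sum>j\<in>UNIV. if j = b then A$l$j else 0)"
    by (rule sum.cong) (auto simp: axis_def)
  then show ?thesis by (simp add: matrix_vector_mult_def)
qed

lemma axis_i_s: "axis k \<i> = \<i> *s axis k (1::complex)"
  by (simp add: vec_eq_iff axis_def)

lemma vec_deriv_comp:
  fixes f :: "'a::real_normed_vector \<Rightarrow> complex^'n"
  assumes "\<And>l. ((\<lambda>x. f x $ l) has_derivative (\<lambda>h. f' h $ l)) (at x)"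
  shows "(f has_derivative f') (at x)"
proof -
  have "\<forall>i\<in>Basis. ((\<lambda>x. f x \<bullet> i) has_derivative (\<lambda>h. f' h \<bullet> i)) (at x)"
  proof
    fix i :: "complex^'n" assume "i \<in> Basis"
    then obtain l b where i: "i = axis l b" by (auto simp: Basis_vec_def)
    show "((\<lambda>x. f x \<bullet> i) has_derivative (\<lambda>h. f' h \<bullet> i)) (at x)"
      unfolding i inner_axis
      using bounded_linear.has_derivative[OF bounded_linear_inner_left assms] by simp
  qed
  then show ?thesis using has_derivative_componentwise_within[of f f' x UNIV] by simp
qed

lemma wz_add: "wz (\<lambda>v. D1 v + D2 v) k = wz D1 k + wz D2 k"
  unfolding wz_def by (simp add: field_simps)

lemma wz_sum: "wz (\<lambda>v. \<Sum>j\<in>(A::'j set). c j * D j v) k = (\<Sum>j\<in>A. c j * wz (D j) k)"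
proof -
  have "wz (\<lambda>v. \<Sum>j\<in>A. c j * D j v) k = (\<Sum>j\<in>A. (c j * D j (axis k 1) - \<i> * (c j * D j (axis k \<i>))) / 2)"
    unfolding wz_def sum_divide_distrib[symmetric] by (simp add: sum_subtractf sum_distrib_left)
  also have "\<dots> = (\<Sum>j\<in>A. c j * wz (D j) k)"
    by (rule sum.cong) (simp_all add: wz_def algebra_simps)
  finally show ?thesis .
qed

lemma wz_sum2: "wz (\<lambda>v. \<Sum>j\<in>(A::'j set). a j * D1 j v + D2 j v * b j) k = (\<Sum>j\<in>A. a j * wz (D1 j) k + wz (D2 j) k * b j)"
proof -
  have "wz (\<lambda>v. \<Sum>j\<in>A. a j * D1 j v + D2 j v * b j) k = (\<Sum>j\<in>A. (a j * D1 j (axis k 1) + D2 j (axis k 1) * b j - \<i> * (a j * D1 j (axis k \<i>) + D2 j (axis k \<i>) * b j)) / 2)"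
    unfolding wz_def sum_divide_distrib[symmetric] by (simp add: sum_subtractf sum_distrib_left)
  also have "\<dots> = (\<Sum>j\<in>A. a j * wz (D1 j) k + wz (D2 j) k * b j)"
    by (rule sum.cong) (simp_all add: wz_def algebra_simps add_divide_distrib diff_divide_distrib)
  finally show ?thesis .
qed

lemma wz_holo:
  assumes "\<And>c v. D (c *s v) = c * D v"
  shows "wz D k = D (axis k 1)" "wz (\<lambda>v. cnj (D v)) k = 0"
  unfolding wz_def axis_i_s assms by (simp_all add: algebra_simps)



theorem proposition3p3:
  fixes U :: "(complex^'n) set"
    and \<rho> :: "complex^'n \<Rightarrow> complex^'m^'n"
    and L :: "complex^'n \<Rightarrow> complex^'n \<Rightarrow> real"
    and z :: "complex^'n" and u :: "complex^'m"
    and Y :: "complex^'k^'n"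
    and \<rho>inv :: "complex^'n^'m" and Yinv :: "complex^'n^'k"
  assumes mn: "CARD('m) < CARD('n)"
    and kdim: "CARD('k) = CARD('n) - CARD('m)"
    and U_open: "open U"
    and \<rho>_holo: "\<And>i \<alpha>. holo_on U (\<lambda>z. \<rho> z $ i $ \<alpha>)"
    and \<rho>_rank: "\<And>z. z \<in> U \<Longrightarrow> rank (\<rho> z) = CARD('m)"
    and L_C2: "C2_on (U \<times> UNIV) (\<lambda>(z, \<eta>). L z \<eta>)"
    and L_nondeg: "\<And>z \<eta>. z \<in> U \<Longrightarrow> det (metric L z \<eta>) \<noteq> 0"
    and zU: "z \<in> U"
    and Y_orth: "\<And>a \<alpha>. (\<Sum>i\<in>UNIV. \<Sum>j\<in>UNIV. metric L z (\<rho> z *v u) $ i $ j *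
                      Y $ i $ a * cnj (\<rho> z $ j $ \<alpha>)) = 0"
    and Y_unit: "\<And>a b. (\<Sum>i\<in>UNIV. \<Sum>j\<in>UNIV. metric L z (\<rho> z *v u) $ i $ j *
                      Y $ i $ a * cnj (Y $ j $ b)) = (if a = b then 1 else 0)"
    and inv1: "\<rho>inv ** \<rho> z = mat 1"
    and inv2: "\<rho>inv ** Y = 0"
    and inv3: "Yinv ** \<rho> z = 0"
    and inv4: "Yinv ** Y = mat 1"
    and inv5: "\<rho> z ** \<rho>inv + Y ** Yinv = mat 1"
  shows "\<forall>\<alpha> k.
     (\<Sum>i\<in>UNIV. \<rho>inv $ \<alpha> $ i *
        (chern_lagrange_N L z (\<rho> z *v u) i k +
         (\<Sum>\<gamma>\<in>UNIV. u $ \<gamma> * dZ k (\<lambda>z'. \<rho> z' $ i $ \<gamma>) z)))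
   = (let gstar = (\<chi> \<alpha>' \<beta>. dZ \<alpha>' (\<lambda>u'. dZbar \<beta>
                       (\<lambda>u''. complex_of_real (L z (\<rho> z *v u''))) u') u)
      in (\<Sum>\<beta>\<in>UNIV. matrix_inv gstar $ \<beta> $ \<alpha> *
            dZ k (\<lambda>z'. dZbar \<beta> (\<lambda>u'. complex_of_real (L z' (\<rho> z' *v u'))) u) z))"
proof (intro allI)
  fix \<alpha> :: 'm and k :: 'n
  from L_C2 obtain f' f'' where
    d1: "\<And>x. x \<in> U \<times> UNIV \<Longrightarrow> ((\<lambda>(z, \<eta>). L z \<eta>) has_derivative blinfun_apply (f' x)) (at x)" and
    d2: "\<And>x. x \<in> U \<times> UNIV \<Longrightarrow> (f' has_derivative blinfun_apply (f'' x)) (at x)"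
    unfolding C2_on_def by blast
  define Hb where "Hb = (\<lambda>j x. wzb (\<lambda>w. complex_of_real (f' x (0, w))) j)"
  define DHb where "DHb = (\<lambda>j x v. wzb (\<lambda>w. complex_of_real (f'' x v (0, w))) j)"
  have Hb_d: "(Hb j has_derivative DHb j x) (at x)" if "x \<in> U \<times> UNIV" for j x
    unfolding Hb_def DHb_def
  proof (rule wzb_deriv)
    fix w
    have "((\<lambda>y. blinfun_apply (f' y) (0, w)) has_derivative (\<lambda>v. blinfun_apply (f'' x v) (0, w))) (at x)"
      using blinfun.FDERIV[OF d2[OF that] has_derivative_const, of "(0,w)"] by simp
    then show "((\<lambda>y. complex_of_real (f' y (0, w))) has_derivative (\<lambda>v. complex_of_real (f'' x v (0, w)))) (at x)"
      using bounded_linear.has_derivative[OF bounded_linear_of_real] by blast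
  qed
  have DHb_bl: "bounded_linear (DHb j x)" if "x \<in> U \<times> UNIV" for j x
    using Hb_d[OF that] has_derivative_bounded_linear by blast
  have L_eta: "((\<lambda>\<eta>. complex_of_real (L z' \<eta>)) has_derivative (\<lambda>w. complex_of_real (f' (z', \<eta>') (0, w)))) (at \<eta>')"
    if "z' \<in> U" for z' \<eta>'
  proof -
    have p: "((\<lambda>\<eta>. (z', \<eta>)) has_derivative (\<lambda>w. (0, w))) (at \<eta>')"
      by (auto intro!: derivative_eq_intros)
    have "((\<lambda>\<eta>. (\<lambda>(z, \<eta>). L z \<eta>) (z', \<eta>)) has_derivative (\<lambda>w. f' (z', \<eta>') (0, w))) (at \<eta>')"
      using has_derivative_compose[OF p d1[of "(z', \<eta>')"]] that by simp
    then show ?thesis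
      using bounded_linear.has_derivative[OF bounded_linear_of_real] by simp
  qed
  have dZbar_eta: "dZbar j (\<lambda>\<eta>. complex_of_real (L z' \<eta>)) \<eta>' = Hb j (z', \<eta>')" if "z' \<in> U" for j z' \<eta>'
    using dZ_deriv(2)[OF L_eta[OF that]] by (simp add: Hb_def)
  have dZbar_u: "dZbar \<beta> (\<lambda>u''. complex_of_real (L z' (\<rho> z' *v u''))) u'
      = (\<Sum>j\<in>UNIV. cnj (\<rho> z' $ j $ \<beta>) * Hb j (z', \<rho> z' *v u'))" if "z' \<in> U" for \<beta> z' u'
  proof -
    let ?D = "\<lambda>w. complex_of_real (f' (z', \<rho> z' *v u') (0, w))"
    have bl: "bounded_linear ?D" using L_eta[OF that] has_derivative_bounded_linear by blast
    have "((\<lambda>u''. complex_of_real (L z' (\<rho> z' *v u''))) has_derivative (\<lambda>w. ?D (\<rho> z' *v w))) (at u')"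
    proof -
      have m: "((\<lambda>x. \<rho> z' *v x) has_derivative (\<lambda>x. \<rho> z' *v x)) (at u')"
        by (rule bounded_linear_imp_has_derivative[OF bl_mv])
      show ?thesis using has_derivative_compose[OF m L_eta[OF that]] by simp
    qed
    then have "dZbar \<beta> (\<lambda>u''. complex_of_real (L z' (\<rho> z' *v u''))) u' = wzb (\<lambda>w. ?D (\<rho> z' *v w)) \<beta>"
      by (rule dZ_deriv(2))
    also have "\<dots> = (\<Sum>l\<in>UNIV. cnj ((\<rho> z' *v axis \<beta> 1) $ l) * wzb ?D l)"
      by (rule wirt_comp(2)[OF bl]) (simp add: axis_i_s vector_scalar_commute)
    also have "\<dots> = (\<Sum>j\<in>UNIV. cnj (\<rho> z' $ j $ \<beta>) * Hb j (z', \<rho> z' *v u'))"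
      by (simp add: mv_axis Hb_def)
    finally show ?thesis .
  qed
  define R where "R = \<rho> z"
  define \<eta>0 where "\<eta>0 = R *v u"
  define x0 where "x0 = (z, \<eta>0)"
  have x0U: "x0 \<in> U \<times> UNIV" using zU by (simp add: x0_def)
  define G where "G = metric L z \<eta>0"
  have G_eq: "G $ i $ j = wz (\<lambda>w. DHb j x0 (0, w)) i" for i j
  proof -
    have p: "((\<lambda>\<eta>. (z, \<eta>)) has_derivative (\<lambda>w. (0, w))) (at \<eta>0)"
      by (auto intro!: derivative_eq_intros)
    have "((\<lambda>\<eta>. Hb j (z, \<eta>)) has_derivative (\<lambda>w. DHb j x0 (0, w))) (at \<eta>0)"
      using has_derivative_compose[OF p Hb_d[OF x0U[unfolded x0_def]]] by (simp add: x0_def)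
    then have "dZ i (\<lambda>\<eta>. Hb j (z, \<eta>)) \<eta>0 = wz (\<lambda>w. DHb j x0 (0, w)) i" by (rule dZ_deriv(1))
    moreover have "G $ i $ j = dZ i (\<lambda>\<eta>. Hb j (z, \<eta>)) \<eta>0"
      by (simp add: G_def metric_def dZbar_eta[OF zU])
    ultimately show ?thesis by simp
  qed
  define Lk where "Lk = (\<lambda>j. dZ k (\<lambda>z'. dZbar j (\<lambda>\<eta>'. complex_of_real (L z' \<eta>')) \<eta>0) z)"
  have Lk_eq: "Lk j = wz (\<lambda>v. DHb j x0 (v, 0)) k" for j
  proof -
    have p: "((\<lambda>z'. (z', \<eta>0)) has_derivative (\<lambda>v. (v, 0))) (at z)"
      by (auto intro!: derivative_eq_intros)
    have "((\<lambda>z'. Hb j (z', \<eta>0)) has_derivative (\<lambda>v. DHb j x0 (v, 0))) (at z)"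
      using has_derivative_compose[OF p Hb_d[OF x0U[unfolded x0_def]]] by (simp add: x0_def)
    then have "((\<lambda>z'. dZbar j (\<lambda>\<eta>'. complex_of_real (L z' \<eta>')) \<eta>0) has_derivative (\<lambda>v. DHb j x0 (v, 0))) (at z)"
      by (rule has_derivative_transform_within_open[OF _ U_open zU]) (simp add: dZbar_eta)
    then show ?thesis unfolding Lk_def by (rule dZ_deriv(1))
  qed
  define gstar where "gstar = (\<chi> \<alpha>' \<beta>. dZ \<alpha>' (\<lambda>u'. dZbar \<beta>
                       (\<lambda>u''. complex_of_real (L z (\<rho> z *v u''))) u') u)"
  have gs_eq: "gstar = (\<chi> \<alpha> \<beta>. \<Sum>j\<in>UNIV. cnj (R$j$\<beta>) * (\<Sum>i\<in>UNIV. R$i$\<alpha> * G$i$j))"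
  proof -
    have "dZ a (\<lambda>u'. dZbar b (\<lambda>u''. complex_of_real (L z (\<rho> z *v u''))) u') u
        = (\<Sum>j\<in>UNIV. cnj (R$j$b) * (\<Sum>i\<in>UNIV. R$i$a * G$i$j))" for a b
    proof -
      have fe: "(\<lambda>u'. dZbar b (\<lambda>u''. complex_of_real (L z (\<rho> z *v u''))) u')
          = (\<lambda>u'. \<Sum>j\<in>UNIV. cnj (R $ j $ b) * Hb j (z, R *v u'))"
        by (simp add: dZbar_u[OF zU] R_def)
      have "((\<lambda>u'. \<Sum>j\<in>UNIV. cnj (R $ j $ b) * Hb j (z, R *v u')) has_derivative
             (\<lambda>w. \<Sum>j\<in>UNIV. cnj (R $ j $ b) * DHb j x0 (0, R *v w))) (at u)"
      proof (intro has_derivative_sum has_derivative_mult_right)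
        fix j
        have p: "((\<lambda>u'. (z, R *v u')) has_derivative (\<lambda>w. (0, R *v w))) (at u)"
          by (auto intro!: derivative_eq_intros bounded_linear_imp_has_derivative[OF bl_mv])
        show "((\<lambda>u'. Hb j (z, R *v u')) has_derivative (\<lambda>w. DHb j x0 (0, R *v w))) (at u)"
          using has_derivative_compose[OF p Hb_d[OF x0U[unfolded x0_def \<eta>0_def]]] by (simp add: x0_def \<eta>0_def)
      qed
      then have "dZ a (\<lambda>u'. \<Sum>j\<in>UNIV. cnj (R $ j $ b) * Hb j (z, R *v u')) u
          = wz (\<lambda>w. \<Sum>j\<in>UNIV. cnj (R $ j $ b) * DHb j x0 (0, R *v w)) a"
        by (rule dZ_deriv(1))
      also have "\<dots> = (\<Sum>j\<in>UNIV. cnj (R $ j $ b) * wz (\<lambda>w. DHb j x0 (0, R *v w)) a)"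
        by (rule wz_sum)
      also have "\<dots> = (\<Sum>j\<in>UNIV. cnj (R$j$b) * (\<Sum>i\<in>UNIV. R$i$a * G$i$j))"
      proof (rule sum.cong[OF refl])
        fix j
        have bl: "bounded_linear (\<lambda>w. DHb j x0 (0, w))"
          using bounded_linear_compose[OF DHb_bl[OF x0U] bounded_linear_Pair[OF bounded_linear_zero bounded_linear_ident]]
          by simp
        have "wz (\<lambda>w. DHb j x0 (0, R *v w)) a = (\<Sum>i\<in>UNIV. (R *v axis a 1) $ i * wz (\<lambda>w. DHb j x0 (0, w)) i)"
          by (rule wirt_comp(1)[OF bl]) (simp add: axis_i_s vector_scalar_commute)
        also have "\<dots> = (\<Sum>i\<in>UNIV. R$i$a * G$i$j)" by (simp add: mv_axis G_eq)
        finally show "cnj (R $ j $ b) * wz (\<lambda>w. DHb j x0 (0, R *v w)) a = cnj (R$j$b) * (\<Sum>i\<in>UNIV. R$i$a * G$i$j)"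
          by simp
      qed
      finally show ?thesis by (simp add: fe)
    qed
    then show ?thesis by (simp add: gstar_def vec_eq_iff)
  qed
  have "\<exists>D\<rho>. \<forall>i \<gamma>. ((\<lambda>z'. \<rho> z' $ i $ \<gamma>) has_derivative D\<rho> i \<gamma>) (at z) \<and> (\<forall>c v. D\<rho> i \<gamma> (c *s v) = c * D\<rho> i \<gamma> v)"
    apply (rule choice, rule allI, rule choice, rule allI)
    using \<rho>_holo zU unfolding holo_on_def by blast
  then obtain D\<rho> where D\<rho>: "\<And>i \<gamma>. ((\<lambda>z'. \<rho> z' $ i $ \<gamma>) has_derivative D\<rho> i \<gamma>) (at z)"
    and D\<rho>c: "\<And>i \<gamma> c v. D\<rho> i \<gamma> (c *s v) = c * D\<rho> i \<gamma> v" by blast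
  have d\<rho>_eq: "dZ k (\<lambda>z'. \<rho> z' $ l $ \<gamma>) z = D\<rho> l \<gamma> (axis k 1)" for l \<gamma>
    using dZ_deriv(1)[OF D\<rho>[of l \<gamma>]] wz_holo(1)[of "D\<rho> l \<gamma>", OF D\<rho>c] by simp
  define dr where "dr = (\<lambda>l. \<Sum>\<gamma>\<in>UNIV. u $ \<gamma> * dZ k (\<lambda>z'. \<rho> z' $ l $ \<gamma>) z)"
  define P where "P = (\<lambda>v. \<chi> l. \<Sum>\<gamma>\<in>UNIV. D\<rho> l \<gamma> v * u $ \<gamma>)"
  have P_d: "((\<lambda>z'. \<rho> z' *v u) has_derivative P) (at z)"
  proof (rule vec_deriv_comp)
    fix l
    show "((\<lambda>z'. (\<rho> z' *v u) $ l) has_derivative (\<lambda>h. P h $ l)) (at z)"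
      unfolding P_def matrix_vector_mult_def
      by (simp, intro has_derivative_sum has_derivative_mult_left D\<rho>)
  qed
  have P_i: "P (axis k \<i>) = \<i> *s P (axis k 1)"
    by (simp add: P_def axis_i_s D\<rho>c vec_eq_iff sum_distrib_left mult_ac)
  have P_dr: "P (axis k 1) $ l = dr l" for l
    by (simp add: P_def dr_def d\<rho>_eq mult.commute)
  define A where "A = (\<lambda>\<beta>. dZ k (\<lambda>z'. dZbar \<beta> (\<lambda>u'. complex_of_real (L z' (\<rho> z' *v u'))) u) z)"
  have A_eq: "A b = (\<Sum>j\<in>UNIV. cnj (R$j$b) * (Lk j + (\<Sum>l\<in>UNIV. dr l * G$l$j)))" for b
  proof -
    have "((\<lambda>z'. \<Sum>j\<in>UNIV. cnj (\<rho> z' $ j $ b) * Hb j (z', \<rho> z' *v u)) has_derivative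
          (\<lambda>v. \<Sum>j\<in>UNIV. cnj (R $ j $ b) * DHb j x0 (v, P v) + cnj (D\<rho> j b v) * Hb j x0)) (at z)"
    proof (intro has_derivative_sum)
      fix j
      have c: "((\<lambda>z'. cnj (\<rho> z' $ j $ b)) has_derivative (\<lambda>v. cnj (D\<rho> j b v))) (at z)"
        using bounded_linear.has_derivative[OF bounded_linear_cnj D\<rho>] by simp
      have p: "((\<lambda>z'. (z', \<rho> z' *v u)) has_derivative (\<lambda>v. (v, P v))) (at z)"
        by (intro has_derivative_Pair has_derivative_ident P_d)
      have h: "((\<lambda>z'. Hb j (z', \<rho> z' *v u)) has_derivative (\<lambda>v. DHb j x0 (v, P v))) (at z)"
        using has_derivative_compose[OF p Hb_d[OF x0U[unfolded x0_def \<eta>0_def R_def]]] by (simp add: x0_def \<eta>0_def R_def)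
      show "((\<lambda>z'. cnj (\<rho> z' $ j $ b) * Hb j (z', \<rho> z' *v u)) has_derivative
          (\<lambda>v. cnj (R $ j $ b) * DHb j x0 (v, P v) + cnj (D\<rho> j b v) * Hb j x0)) (at z)"
        using has_derivative_mult[OF c h] by (simp add: R_def x0_def \<eta>0_def)
    qed
    then have "((\<lambda>z'. dZbar b (\<lambda>u'. complex_of_real (L z' (\<rho> z' *v u'))) u) has_derivative
          (\<lambda>v. \<Sum>j\<in>UNIV. cnj (R $ j $ b) * DHb j x0 (v, P v) + cnj (D\<rho> j b v) * Hb j x0)) (at z)"
      by (rule has_derivative_transform_within_open[OF _ U_open zU]) (simp add: dZbar_u)
    then have "A b = wz (\<lambda>v. \<Sum>j\<in>UNIV. cnj (R $ j $ b) * DHb j x0 (v, P v) + cnj (D\<rho> j b v) * Hb j x0) k"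
      unfolding A_def by (rule dZ_deriv(1))
    also have "\<dots> = (\<Sum>j\<in>UNIV. cnj (R $ j $ b) * wz (\<lambda>v. DHb j x0 (v, P v)) k + wz (\<lambda>v. cnj (D\<rho> j b v)) k * Hb j x0)"
      by (rule wz_sum2)
    also have "\<dots> = (\<Sum>j\<in>UNIV. cnj (R$j$b) * (Lk j + (\<Sum>l\<in>UNIV. dr l * G$l$j)))"
    proof (rule sum.cong[OF refl])
      fix j
      have bl: "bounded_linear (\<lambda>w. DHb j x0 (0, w))"
        using bounded_linear_compose[OF DHb_bl[OF x0U] bounded_linear_Pair[OF bounded_linear_zero bounded_linear_ident]]
        by simp
      have split: "DHb j x0 (v, P v) = DHb j x0 (v, 0) + DHb j x0 (0, P v)" for v
      proof -
        have e: "(v, P v) = (v, 0) + (0, P v)" by simp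
        show ?thesis by (subst e) (rule linear_add[OF bounded_linear.linear[OF DHb_bl[OF x0U]]])
      qed
      have "wz (\<lambda>v. DHb j x0 (v, P v)) k = wz (\<lambda>v. DHb j x0 (v, 0)) k + wz (\<lambda>v. DHb j x0 (0, P v)) k"
        unfolding split by (rule wz_add)
      also have "wz (\<lambda>v. DHb j x0 (0, P v)) k = (\<Sum>l\<in>UNIV. P (axis k 1) $ l * wz (\<lambda>w. DHb j x0 (0, w)) l)"
        by (rule wirt_comp(1)[OF bl P_i])
      finally have "wz (\<lambda>v. DHb j x0 (v, P v)) k = Lk j + (\<Sum>l\<in>UNIV. dr l * G$l$j)"
        by (simp add: Lk_eq P_dr G_eq)
      moreover have "wz (\<lambda>v. cnj (D\<rho> j b v)) k = 0" by (rule wz_holo(2)[of "D\<rho> j b", OF D\<rho>c])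
      ultimately show "cnj (R $ j $ b) * wz (\<lambda>v. DHb j x0 (v, P v)) k + wz (\<lambda>v. cnj (D\<rho> j b v)) k * Hb j x0
          = cnj (R$j$b) * (Lk j + (\<Sum>l\<in>UNIV. dr l * G$l$j))" by simp
    qed
    finally show ?thesis .
  qed
  have detG: "det G \<noteq> 0" unfolding G_def by (rule L_nondeg[OF zU])
  have Yo: "\<And>a \<alpha>. (\<Sum>i\<in>UNIV. \<Sum>j\<in>UNIV. G $ i $ j * Y $ i $ a * cnj (R $ j $ \<alpha>)) = 0"
    using Y_orth by (simp add: G_def \<eta>0_def R_def)
  have i1: "\<rho>inv ** R = mat 1" using inv1 by (simp add: R_def)
  have i5: "R ** \<rho>inv + Y ** Yinv = mat 1" using inv5 by (simp add: R_def)
  have Ad: "(\<chi> \<beta>. A \<beta>) = (\<chi> \<beta>. \<Sum>j\<in>UNIV. cnj (R$j$\<beta>) * ((\<chi> j. Lk j)$j + (\<Sum>l\<in>UNIV. (\<chi> l. dr l)$l * G$l$j)))"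
    by (simp add: vec_eq_iff A_eq)
  have al: "(\<Sum>i\<in>UNIV. \<rho>inv $ \<alpha> $ i * ((\<Sum>j\<in>UNIV. matrix_inv G $ j $ i * (\<chi> j. Lk j) $ j) + (\<chi> l. dr l) $ i))
       = (\<Sum>\<beta>\<in>UNIV. matrix_inv gstar $ \<beta> $ \<alpha> * (\<chi> \<beta>. A \<beta>) $ \<beta>)"
    by (rule alg[OF detG Yo i1 i5 gs_eq Ad])
  have cl: "chern_lagrange_N L z (\<rho> z *v u) i k = (\<Sum>j\<in>UNIV. matrix_inv G $ j $ i * Lk j)" for i
    by (simp add: chern_lagrange_N_def G_def Lk_def \<eta>0_def R_def)
  show "(\<Sum>i\<in>UNIV. \<rho>inv $ \<alpha> $ i *
        (chern_lagrange_N L z (\<rho> z *v u) i k +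
         (\<Sum>\<gamma>\<in>UNIV. u $ \<gamma> * dZ k (\<lambda>z'. \<rho> z' $ i $ \<gamma>) z)))
   = (let gstar = (\<chi> \<alpha>' \<beta>. dZ \<alpha>' (\<lambda>u'. dZbar \<beta>
                       (\<lambda>u''. complex_of_real (L z (\<rho> z *v u''))) u') u)
      in (\<Sum>\<beta>\<in>UNIV. matrix_inv gstar $ \<beta> $ \<alpha> *
            dZ k (\<lambda>z'. dZbar \<beta> (\<lambda>u'. complex_of_real (L z' (\<rho> z' *v u'))) u) z))"
    using al unfolding Let_def gstar_def[symmetric] by (simp add: cl dr_def A_def)
qed

end
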